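(* Let $n \ge 2$, let $K, L$ be compact convex subsets of $\mathbb{R}^n$, and let $d \in \{1, \dots, n-1\}$. Suppose that for every $(n-d)$-dimensional linear subspace $\xi \subseteq \mathbb{R}^n$, the projection $L_\xi$ contains a translate of $K_\xi$. Then there exists $x \in \mathbb{R}^n$ such that $$K + x \subseteq \tfrac{n}{n-d} L.$$
   Context: For a set $S\subseteq\mathbb{R}^n$ and a linear subspace $\xi$, $S_\xi$ denotes the orthogonal projection of $S$ onto $\xi$. "$A$ contains a translate of $B$" means $B + w \subseteq A$ for some vector $w$. *)

theory Defs
  imports "HOL-Analysis.Analysis"
begin

definition orth_proj :: "'a::euclidean_space set \<Rightarrow> 'a \<Rightarrow> 'a" where
  "orth_proj xi x = (THE p. p \<in> xi \<and> (\<forall>y\<in>xi. (x - p) \<bullet> y = 0))"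

definition proj_set :: "'a::euclidean_space set \<Rightarrow> 'a set \<Rightarrow> 'a set" where
  "proj_set xi S = orth_proj xi ` S"

end

theory Submission
  imports Defs
begin


definition hs :: "'a::euclidean_space set \<Rightarrow> 'a \<Rightarrow> real" where
  "hs A u = (SUP a\<in>A. a \<bullet> u)"

lemma hs_attain:
  assumes "compact A" "A \<noteq> {}"
  obtains a where "a \<in> A" "hs A u = a \<bullet> u" "\<And>b. b \<in> A \<Longrightarrow> b \<bullet> u \<le> a \<bullet> u"
proof -
  have "compact ((\<lambda>a. a \<bullet> u) ` A)"
    by (intro compact_continuous_image assms continuous_intros)
  then obtain s where s: "s \<in> (\<lambda>a. a \<bullet> u) ` A" "\<And>t. t \<in> (\<lambda>a. a \<bullet> u) ` A \<Longrightarrow> t \<le> s"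
    using compact_attains_sup assms(2) by (metis image_is_empty)
  then obtain a where a: "a \<in> A" "s = a \<bullet> u" by auto
  have "hs A u = s" unfolding hs_def by (rule cSup_eq_maximum) (use s in auto)
  then show ?thesis using that a s by auto
qed

lemma hs_upper: "compact A \<Longrightarrow> b \<in> A \<Longrightarrow> b \<bullet> u \<le> hs A u"
  by (metis empty_iff hs_attain)

lemma hs_scale: assumes "compact A" "A \<noteq> {}" "c \<ge> 0" shows "hs A (c *\<^sub>R u) = c * hs A u"
proof -
  obtain a where a: "a \<in> A" "hs A u = a \<bullet> u" "\<And>b. b \<in> A \<Longrightarrow> b \<bullet> u \<le> a \<bullet> u"
    using hs_attain assms by blast
  obtain a' where a': "a' \<in> A" "hs A (c *\<^sub>R u) = a' \<bullet> (c *\<^sub>R u)"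
    using hs_attain assms by blast
  have 1: "c * (a' \<bullet> u) \<le> c * (a \<bullet> u)" using a(3)[OF a'(1)] assms(3)
    by (simp add: mult_left_mono)
  have "a \<bullet> (c *\<^sub>R u) \<le> hs A (c *\<^sub>R u)" using hs_upper assms a by blast
  then have 2: "c * (a \<bullet> u) \<le> c * (a' \<bullet> u)" using a' by simp
  show ?thesis using 1 2 a a' by simp
qed

lemma hs_add: assumes "compact A" "A \<noteq> {}" shows "hs A (u + v) \<le> hs A u + hs A v"
proof -
  obtain a where a: "a \<in> A" "hs A (u+v) = a \<bullet> (u+v)"
    using hs_attain assms by blast
  show ?thesis using hs_upper[OF assms(1) a(1), of u] hs_upper[OF assms(1) a(1), of v] a
    by (simp add: inner_add_right)
qed



lemma sub_sum:
  fixes h :: "'a::real_vector \<Rightarrow> real"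
  assumes sub: "\<And>u v. h (u+v) \<le> h u + h v" and h0: "h 0 = 0"
  shows "finite S \<Longrightarrow> h (\<Sum>i\<in>S. f i) \<le> (\<Sum>i\<in>S. h (f i))"
proof (induction S rule: finite_induct)
  case empty then show ?case by (simp add: h0)
next
  case (insert x F)
  then show ?case using sub[of "f x" "sum f F"] by simp
qed

lemma sum_swap_offdiag:
  "finite S \<Longrightarrow> (\<Sum>j\<in>S. \<Sum>i\<in>S-{j}. F i j) = (\<Sum>i\<in>S. \<Sum>j\<in>S-{i}. (F i j :: real))"
proof -
  assume fin: "finite S"
  have "(\<Sum>j\<in>S. \<Sum>i\<in>S-{j}. F i j) = (\<Sum>j\<in>S. (\<Sum>i\<in>S. F i j) - F j j)"
    using fin by (intro sum.cong refl) (simp add: sum_diff1)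
  also have "\<dots> = (\<Sum>j\<in>S. \<Sum>i\<in>S. F i j) - (\<Sum>j\<in>S. F j j)" by (simp add: sum_subtractf)
  also have "\<dots> = (\<Sum>i\<in>S. \<Sum>j\<in>S. F i j) - (\<Sum>j\<in>S. F j j)" by (subst sum.swap) simp
  also have "\<dots> = (\<Sum>i\<in>S. (\<Sum>j\<in>S. F i j) - F i i)" by (simp add: sum_subtractf)
  also have "\<dots> = (\<Sum>i\<in>S. \<Sum>j\<in>S-{i}. F i j)"
    using fin by (intro sum.cong refl) (simp add: sum_diff1)
  finally show ?thesis .
qed

lemma comb:
  fixes hK hL :: "'a::real_vector \<Rightarrow> real" and m :: nat and S :: "'i set"
  assumes subK: "\<And>u v. hK (u+v) \<le> hK u + hK v"
    and homK: "\<And>c u. c \<ge> 0 \<Longrightarrow> hK (c *\<^sub>R u) = c * hK u"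
    and subL: "\<And>u v. hL (u+v) \<le> hL u + hL v"
    and homL: "\<And>c u. c \<ge> 0 \<Longrightarrow> hL (c *\<^sub>R u) = c * hL u"
    and m1: "m \<ge> 1"
    and P: "\<And>S (a::'i \<Rightarrow> 'a). finite S \<Longrightarrow> card S = m+1 \<Longrightarrow> (\<Sum>i\<in>S. a i) = 0 \<Longrightarrow>
              (\<Sum>i\<in>S. hK (a i)) \<le> (\<Sum>i\<in>S. hL (a i))"
  shows "N \<ge> m+1 \<Longrightarrow> finite S \<Longrightarrow> card S = N \<Longrightarrow> (\<Sum>i\<in>S. a i) = 0 \<Longrightarrow>
     real m * (\<Sum>i\<in>S. hK (a i)) \<le> (real N - 1) * (\<Sum>i\<in>S. hL (a i))"
proof (induction N arbitrary: S a rule: nat_induct_at_least)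
  case base
  then show ?case using P[of S a] by (simp add: mult_left_mono)
next
  case (Suc N)
  note fin = \<open>finite S\<close> and cS = \<open>card S = Suc N\<close> and s0 = \<open>(\<Sum>i\<in>S. a i) = 0\<close>
  have Npos: "real N \<ge> 2" using Suc.hyps m1 by simp
  have hK0: "hK 0 = 0" using homK[of 0 0] by simp
  have hL0: "hL 0 = 0" using homL[of 0 0] by simp
  define H where "H = (\<Sum>i\<in>S. hL (a i))"
  define F where "F i j = hK (a i + (1 / real N) *\<^sub>R a j)" for i j
  have step: "real m * (\<Sum>i\<in>S-{j}. F i j) \<le> (real N - 1) * H" if j: "j \<in> S" for j
  proof -
    have c: "card (S - {j}) = N" using cS j fin by simp
    have sumS: "(\<Sum>i\<in>S. a i) = a j + (\<Sum>i\<in>S-{j}. a i)" using fin j by (simp add: sum.remove)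
    have "(\<Sum>i\<in>S-{j}. a i + (1 / real N) *\<^sub>R a j) = (\<Sum>i\<in>S-{j}. a i) + real N *\<^sub>R ((1 / real N) *\<^sub>R a j)"
      by (simp add: sum.distrib c sum_constant_scaleR)
    also have "\<dots> = 0" using sumS s0 Npos by (simp add: algebra_simps)
    finally have z: "(\<Sum>i\<in>S-{j}. a i + (1 / real N) *\<^sub>R a j) = 0" .
    have IH: "real m * (\<Sum>i\<in>S-{j}. hK (a i + (1 / real N) *\<^sub>R a j))
        \<le> (real N - 1) * (\<Sum>i\<in>S-{j}. hL (a i + (1 / real N) *\<^sub>R a j))"
      using Suc.IH[of "S-{j}" "\<lambda>i. a i + (1 / real N) *\<^sub>R a j"] fin c z by simp
    have "(\<Sum>i\<in>S-{j}. hL (a i + (1 / real N) *\<^sub>R a j)) \<le> (\<Sum>i\<in>S-{j}. hL (a i) + (1 / real N) * hL (a j))"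
      by (intro sum_mono) (metis subL homL divide_nonneg_nonneg of_nat_0_le_iff zero_le_one)
    also have "\<dots> = (\<Sum>i\<in>S-{j}. hL (a i)) + hL (a j)" using c Npos by (simp add: sum.distrib)
    also have "\<dots> = H" unfolding H_def using fin j by (simp add: sum.remove)
    finally have "(\<Sum>i\<in>S-{j}. hL (a i + (1 / real N) *\<^sub>R a j)) \<le> H" .
    then have "(real N - 1) * (\<Sum>i\<in>S-{j}. hL (a i + (1 / real N) *\<^sub>R a j)) \<le> (real N - 1) * H"
      using Npos by (intro mult_left_mono) auto
    then show ?thesis using IH unfolding F_def by linarith
  qed
  have low: "(real N - 1 / real N) * hK (a i) \<le> (\<Sum>j\<in>S-{i}. F i j)" if i: "i \<in> S" for i
  proof -
    have c: "card (S - {i}) = N" using cS i fin by simp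
    have sumS: "(\<Sum>j\<in>S. a j) = a i + (\<Sum>j\<in>S-{i}. a j)" using fin i by (simp add: sum.remove)
    have "(\<Sum>j\<in>S-{i}. a i + (1 / real N) *\<^sub>R a j) = real N *\<^sub>R a i + (1 / real N) *\<^sub>R (\<Sum>j\<in>S-{i}. a j)"
      by (simp add: sum.distrib c scaleR_sum_right sum_constant_scaleR)
    also have "\<dots> = (real N - 1 / real N) *\<^sub>R a i" using sumS s0
      by (simp add: algebra_simps eq_neg_iff_add_eq_0[symmetric])
    finally have e: "(\<Sum>j\<in>S-{i}. a i + (1 / real N) *\<^sub>R a j) = (real N - 1 / real N) *\<^sub>R a i" .
    have "hK ((real N - 1 / real N) *\<^sub>R a i) \<le> (\<Sum>j\<in>S-{i}. F i j)"
      unfolding F_def e[symmetric] using fin by (intro sub_sum[OF subK hK0]) simp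
    moreover have "1 / real N \<le> 1" using Npos by simp
    then have "real N - 1 / real N \<ge> 0" using Npos by linarith
    ultimately show ?thesis using homK by simp
  qed
  have "real m * (\<Sum>j\<in>S. \<Sum>i\<in>S-{j}. F i j) = (\<Sum>j\<in>S. real m * (\<Sum>i\<in>S-{j}. F i j))"
    by (rule sum_distrib_left)
  also have "\<dots> \<le> (\<Sum>j\<in>S. (real N - 1) * H)"
    by (intro sum_mono step)
  also have "\<dots> = real (Suc N) * (real N - 1) * H" using cS by simp
  finally have A: "real m * (\<Sum>i\<in>S. \<Sum>j\<in>S-{i}. F i j) \<le> real (Suc N) * (real N - 1) * H"
    using sum_swap_offdiag[OF fin, of F] by simp
  have "(real N - 1 / real N) * (\<Sum>i\<in>S. hK (a i)) = (\<Sum>i\<in>S. (real N - 1 / real N) * hK (a i))"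
    by (rule sum_distrib_left)
  also have "\<dots> \<le> (\<Sum>i\<in>S. \<Sum>j\<in>S-{i}. F i j)" by (intro sum_mono low)
  finally have "real m * ((real N - 1 / real N) * (\<Sum>i\<in>S. hK (a i))) \<le> real m * (\<Sum>i\<in>S. \<Sum>j\<in>S-{i}. F i j)"
    by (intro mult_left_mono) auto
  with A have B: "real m * ((real N - 1 / real N) * (\<Sum>i\<in>S. hK (a i))) \<le> real (Suc N) * (real N - 1) * H"
    by linarith
  define X where "X = real m * (\<Sum>i\<in>S. hK (a i))"
  have "(real N - 1 / real N) = (real N + 1) * (real N - 1) / real N" using Npos
    by (simp add: field_simps power2_eq_square)
  with B have "(real N + 1) * (real N - 1) / real N * X \<le> (real N + 1) * (real N - 1) * H"
    unfolding X_def by (simp add: algebra_simps)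
  then have "(real N + 1) * (real N - 1) * (X / real N) \<le> (real N + 1) * (real N - 1) * H"
    by (simp add: field_simps)
  then have "X / real N \<le> H" using Npos
    by (subst (asm) mult_le_cancel_left_pos) auto
  then have "X \<le> real N * H" using Npos by (simp add: field_simps)
  then show ?case unfolding X_def H_def by simp
qed



lemma exists_rel:
  fixes a :: "'i \<Rightarrow> 'a::euclidean_space"
  assumes fin: "finite S" and big: "card S > DIM('a)"
  shows "\<exists>c. (\<Sum>i\<in>S. c i *\<^sub>R a i) = 0 \<and> (\<exists>i\<in>S. c i \<noteq> 0)"
proof (cases "inj_on a S")
  case True
  have "card (a ` S) > DIM('a)" using True big by (simp add: card_image)
  then have "dependent (a ` S)" using dependent_biggerset by blast
  then obtain u where u: "\<exists>v\<in>a ` S. u v \<noteq> 0" "(\<Sum>v\<in>a ` S. u v *\<^sub>R v) = 0"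
    using fin by (auto simp: dependent_finite)
  have "(\<Sum>i\<in>S. u (a i) *\<^sub>R a i) = (\<Sum>v\<in>a ` S. u v *\<^sub>R v)"
    using True by (simp add: sum.reindex)
  then show ?thesis using u by (intro exI[of _ "\<lambda>i. u (a i)"]) auto
next
  case False
  then obtain i k where ik: "i \<in> S" "k \<in> S" "i \<noteq> k" "a i = a k"
    unfolding inj_on_def by blast
  define c where "c x = (if x = i then 1 else if x = k then -1 else (0::real))" for x
  have "(\<Sum>x\<in>S. c x *\<^sub>R a x) = (\<Sum>x\<in>S. (if x = i then a i else 0) - (if x = k then a k else 0))"
    by (intro sum.cong refl) (use ik in \<open>auto simp: c_def\<close>)
  also have "\<dots> = 0" using fin ik by (simp add: sum_subtractf)
  finally show ?thesis using ik by (intro exI[of _ c]) (auto simp: c_def)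
qed

lemma reduce:
  fixes g :: "'a::euclidean_space \<Rightarrow> real" and S :: "'i set"
  assumes hom: "\<And>c u. c \<ge> 0 \<Longrightarrow> g (c *\<^sub>R u) = c * g u"
    and small: "\<And>(T::'i set) b. finite T \<Longrightarrow> card T \<le> DIM('a) + 1 \<Longrightarrow> (\<Sum>i\<in>T. b i) = 0 \<Longrightarrow>
          (\<Sum>i\<in>T. g (b i)) \<le> 0"
  shows "finite S \<Longrightarrow> (\<Sum>i\<in>S. a i) = 0 \<Longrightarrow> (\<Sum>i\<in>S. g (a i)) \<le> 0"
proof (induction "card S" arbitrary: S a rule: less_induct)
  case less
  note fin = \<open>finite S\<close> and s0 = \<open>(\<Sum>i\<in>S. a i) = 0\<close>
  show ?case
  proof (cases "card S \<le> DIM('a) + 1")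
    case True then show ?thesis using small fin s0 by blast
  next
    case False
    have g0: "g 0 = 0" using hom[of 0 0] by simp
    obtain j where j: "j \<in> S" using False by fastforce
    have "card (S - {j}) > DIM('a)" using False j fin by simp
    then obtain c i0 where c: "(\<Sum>i\<in>S-{j}. c i *\<^sub>R a i) = 0" "i0 \<in> S-{j}" "c i0 \<noteq> 0"
      using exists_rel[of "S-{j}" a] fin by blast
    define c' where "c' x = (if x = j then 0 else c x)" for x
    have c'0: "(\<Sum>i\<in>S. c' i *\<^sub>R a i) = 0"
    proof -
      have "(\<Sum>i\<in>S. c' i *\<^sub>R a i) = c' j *\<^sub>R a j + (\<Sum>i\<in>S-{j}. c' i *\<^sub>R a i)"
        using fin j by (simp add: sum.remove)
      also have "\<dots> = (\<Sum>i\<in>S-{j}. c i *\<^sub>R a i)" by (simp add: c'_def)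
      finally show ?thesis using c by simp
    qed
    define lo where "lo = Min (c' ` S)"
    define hi where "hi = Max (c' ` S)"
    have lo_le: "lo \<le> c' x" if "x \<in> S" for x using fin that unfolding lo_def by simp
    have hi_ge: "c' x \<le> hi" if "x \<in> S" for x using fin that unfolding hi_def by simp
    obtain xl where xl: "xl \<in> S" "c' xl = lo"
      unfolding lo_def using fin j Min_in[of "c' ` S"] by fastforce
    obtain xh where xh: "xh \<in> S" "c' xh = hi"
      unfolding hi_def using fin j Max_in[of "c' ` S"] by fastforce
    have "c' j \<noteq> c' i0" using c by (auto simp: c'_def)
    moreover have "i0 \<in> S" using c(2) by blast
    ultimately have lohi: "lo < hi" using lo_le[OF j] hi_ge[OF j] lo_le[of i0] hi_ge[of i0] by fastforce
    define \<alpha> where "\<alpha> x = (c' x - lo) / (hi - lo)" for x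
    have \<alpha>01: "0 \<le> \<alpha> x" "\<alpha> x \<le> 1" if "x \<in> S" for x
      using lo_le[OF that] hi_ge[OF that] lohi by (auto simp: \<alpha>_def field_simps)
    have b1: "(\<Sum>i\<in>S. \<alpha> i *\<^sub>R a i) = 0"
    proof -
      have "(\<Sum>i\<in>S. \<alpha> i *\<^sub>R a i) = (1 / (hi - lo)) *\<^sub>R ((\<Sum>i\<in>S. c' i *\<^sub>R a i) - lo *\<^sub>R (\<Sum>i\<in>S. a i))"
        by (simp add: \<alpha>_def scaleR_sum_right sum_subtractf[symmetric] scaleR_diff_right
            divide_inverse algebra_simps)
      then show ?thesis using c'0 s0 by simp
    qed
    have b2: "(\<Sum>i\<in>S. (1 - \<alpha> i) *\<^sub>R a i) = 0"
      using b1 s0 by (simp add: scaleR_diff_left sum_subtractf)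
    define S1 where "S1 = {x\<in>S. \<alpha> x \<noteq> 0}"
    define S2 where "S2 = {x\<in>S. \<alpha> x \<noteq> 1}"
    have "\<alpha> xl = 0" using xl by (simp add: \<alpha>_def)
    then have "S1 \<subset> S" using xl unfolding S1_def by blast
    then have cS1: "card S1 < card S" using fin by (simp add: psubset_card_mono)
    have "\<alpha> xh = 1" using xh lohi by (simp add: \<alpha>_def)
    then have "S2 \<subset> S" using xh unfolding S2_def by blast
    then have cS2: "card S2 < card S" using fin by (simp add: psubset_card_mono)
    have f1: "finite S1" "finite S2" using fin by (auto simp: S1_def S2_def)
    have e1: "(\<Sum>i\<in>S1. \<alpha> i *\<^sub>R a i) = (\<Sum>i\<in>S. \<alpha> i *\<^sub>R a i)"
      using fin by (intro sum.mono_neutral_left) (auto simp: S1_def)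
    have e2: "(\<Sum>i\<in>S2. (1 - \<alpha> i) *\<^sub>R a i) = (\<Sum>i\<in>S. (1 - \<alpha> i) *\<^sub>R a i)"
      using fin by (intro sum.mono_neutral_left) (auto simp: S2_def)
    have g1: "(\<Sum>i\<in>S1. g (\<alpha> i *\<^sub>R a i)) \<le> 0"
      using less(1)[OF cS1 f1(1)] e1 b1 by simp
    have g2: "(\<Sum>i\<in>S2. g ((1 - \<alpha> i) *\<^sub>R a i)) \<le> 0"
      using less(1)[OF cS2 f1(2)] e2 b2 by simp
    have e1': "(\<Sum>i\<in>S1. g (\<alpha> i *\<^sub>R a i)) = (\<Sum>i\<in>S. g (\<alpha> i *\<^sub>R a i))"
      using fin by (intro sum.mono_neutral_left) (auto simp: S1_def g0)
    have e2': "(\<Sum>i\<in>S2. g ((1 - \<alpha> i) *\<^sub>R a i)) = (\<Sum>i\<in>S. g ((1 - \<alpha> i) *\<^sub>R a i))"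
      using fin by (intro sum.mono_neutral_left) (auto simp: S2_def g0)
    have "(\<Sum>i\<in>S. g (a i)) = (\<Sum>i\<in>S. g (\<alpha> i *\<^sub>R a i) + g ((1 - \<alpha> i) *\<^sub>R a i))"
    proof (intro sum.cong refl)
      fix x assume x: "x \<in> S"
      show "g (a x) = g (\<alpha> x *\<^sub>R a x) + g ((1 - \<alpha> x) *\<^sub>R a x)"
        using hom[of "\<alpha> x" "a x"] hom[of "1 - \<alpha> x" "a x"] \<alpha>01[OF x] by (simp add: algebra_simps)
    qed
    also have "\<dots> \<le> 0" using g1 g2 e1' e2' by (simp add: sum.distrib)
    finally show ?thesis .
  qed
qed



lemma orth_proj_prop:
  fixes xi :: "'a::euclidean_space set"
  assumes "subspace xi"
  shows "orth_proj xi x \<in> xi \<and> (\<forall>y\<in>xi. (x - orth_proj xi x) \<bullet> y = 0)"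
proof -
  obtain y z where yz: "y \<in> span xi" "\<And>w. w \<in> span xi \<Longrightarrow> orthogonal z w" "x = y + z"
    using orthogonal_subspace_decomp_exists by blast
  have ex: "y \<in> xi \<and> (\<forall>w\<in>xi. (x - y) \<bullet> w = 0)"
  proof -
    have sp: "span xi = xi" using assms by simp
    show ?thesis using yz unfolding sp by (auto simp: orthogonal_def)
  qed
  have uniq: "p = y" if p: "p \<in> xi \<and> (\<forall>w\<in>xi. (x - p) \<bullet> w = 0)" for p
  proof -
    have d: "p - y \<in> xi" using p ex assms by (simp add: subspace_diff)
    have "(x - y) \<bullet> (p - y) - (x - p) \<bullet> (p - y) = 0" using p ex d by simp
    then have "((x - y) - (x - p)) \<bullet> (p - y) = 0" by (simp only: inner_diff_left)
    moreover have "(x - y) - (x - p) = p - y" by simp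
    ultimately have "(p - y) \<bullet> (p - y) = 0" by simp
    then show ?thesis by simp
  qed
  have "orth_proj xi x = y" unfolding orth_proj_def
    using ex uniq by (intro the_equality) blast+
  then show ?thesis using ex by simp
qed

lemma orth_proj_inner:
  fixes xi :: "'a::euclidean_space set"
  assumes "subspace xi" "u \<in> xi"
  shows "orth_proj xi x \<bullet> u = x \<bullet> u"
proof -
  have "(x - orth_proj xi x) \<bullet> u = 0" using orth_proj_prop[OF assms(1)] assms(2) by blast
  then show ?thesis by (simp add: inner_diff_left)
qed

lemma subspace_extend:
  fixes S :: "'a::euclidean_space set"
  assumes "dim S \<le> k" "k \<le> DIM('a)"
  shows "\<exists>T. subspace T \<and> S \<subseteq> T \<and> dim T = k"
proof -
  have gen: "\<And>j. dim S + j \<le> DIM('a) \<Longrightarrow> \<exists>T. subspace T \<and> S \<subseteq> T \<and> dim T = dim S + j"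
  proof -
    fix j show "dim S + j \<le> DIM('a) \<Longrightarrow> \<exists>T. subspace T \<and> S \<subseteq> T \<and> dim T = dim S + j"
    proof (induction j)
      case 0 then show ?case by (intro exI[of _ "span S"]) (auto simp: span_superset)
    next
      case (Suc j)
      then obtain T where T: "subspace T" "S \<subseteq> T" "dim T = dim S + j" by auto
      have "dim T < DIM('a)" using T Suc.prems by simp
      then obtain y where y: "y \<notin> T" by (metis UNIV_I dim_UNIV less_irrefl subsetI subset_antisym)
      have "y \<notin> span T" using y T(1) by (metis span_eq_iff)
      then have "dim (span (insert y T)) = Suc (dim T)" by (simp add: dim_insert)
      moreover have "S \<subseteq> span (insert y T)" using T(2) span_base by blast
      moreover have "dim (span (insert y T)) = dim S + Suc j" using calculation(1) T(3) by simp
      moreover have "subspace (span (insert y T))" by (rule subspace_span)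
      ultimately show ?case by blast
    qed
  qed
  have e: "dim S + (k - dim S) = k" using assms(1) by simp
  show ?thesis using gen[of "k - dim S"] assms(2) unfolding e by blast
qed



theorem theorem6p1:
  fixes K L :: "'a::euclidean_space set" and d :: nat
  assumes "DIM('a) \<ge> 2"
    and "compact K" "convex K" "compact L" "convex L"
    and "1 \<le> d" "d \<le> DIM('a) - 1"
    and "\<And>xi. subspace xi \<Longrightarrow> dim xi = DIM('a) - d \<Longrightarrow>
           \<exists>w. (\<lambda>v. v + w) ` proj_set xi K \<subseteq> proj_set xi L"
  shows "\<exists>x. (\<lambda>v. v + x) ` K \<subseteq> (\<lambda>v. (real DIM('a) / real (DIM('a) - d)) *\<^sub>R v) ` L"
proof (cases "K = {}")
  case True then show ?thesis by simp
next
  case Kne: False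
  note hyp = assms(8)
  define n where "n = DIM('a)"
  define m where "m = n - d"
  define lam where "lam = real n / real m"
  have m1: "m \<ge> 1" using assms(6,7) unfolding m_def n_def by arith
  have mn: "m \<le> n" unfolding m_def by arith
  have lam1: "lam \<ge> 1" using m1 mn unfolding lam_def by (simp add: le_divide_eq_1)
  have Lne: "L \<noteq> {}"
  proof
    assume L0: "L = {}"
    have "\<exists>T::'a set. subspace T \<and> dim T = m"
      using subspace_extend[of "{}::'a set" m] mn unfolding n_def by simp
    then obtain xi :: "'a set" where xi: "subspace xi" "dim xi = m" by blast
    obtain w where "(\<lambda>v. v + w) ` proj_set xi K \<subseteq> proj_set xi L"
      using hyp[OF xi(1)] xi(2) unfolding m_def n_def by blast
    moreover have "proj_set xi L = {}" using L0 by (simp add: proj_set_def)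
    ultimately have "proj_set xi K = {}" by blast
    then show False using Kne by (simp add: proj_set_def)
  qed
  define hK where "hK = hs K"
  define hL where "hL = hs L"
  have subK: "\<And>u v. hK (u+v) \<le> hK u + hK v" unfolding hK_def using hs_add assms(2) Kne by blast
  have subL: "\<And>u v. hL (u+v) \<le> hL u + hL v" unfolding hL_def using hs_add assms(4) Lne by blast
  have homK: "\<And>c u. c \<ge> 0 \<Longrightarrow> hK (c *\<^sub>R u) = c * hK u" unfolding hK_def using hs_scale assms(2) Kne by blast
  have homL: "\<And>c u. c \<ge> 0 \<Longrightarrow> hL (c *\<^sub>R u) = c * hL u" unfolding hL_def using hs_scale assms(4) Lne by blast
  have hL0: "hL 0 = 0" using homL[of 0 0] by simp
  have hK0: "hK 0 = 0" using homK[of 0 0] by simp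
  have proj: "\<exists>w. \<forall>u\<in>xi. hK u + w \<bullet> u \<le> hL u" if xi: "subspace xi" "dim xi = m" for xi
  proof -
    obtain w where w: "(\<lambda>v. v + w) ` proj_set xi K \<subseteq> proj_set xi L"
      using hyp[OF xi(1)] xi(2) unfolding m_def n_def by blast
    have "hK u + w \<bullet> u \<le> hL u" if u: "u \<in> xi" for u
    proof -
      obtain k where k: "k \<in> K" "hs K u = k \<bullet> u"
        using hs_attain[OF assms(2) Kne, of u] by blast
      have "orth_proj xi k \<in> proj_set xi K" unfolding proj_set_def using k(1) by (rule imageI)
      then have "orth_proj xi k + w \<in> (\<lambda>v. v + w) ` proj_set xi K" by (rule imageI)
      then have "orth_proj xi k + w \<in> proj_set xi L" using w by blast
      then obtain l where l: "l \<in> L" "orth_proj xi k + w = orth_proj xi l"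
        unfolding proj_set_def by blast
      have "(orth_proj xi k + w) \<bullet> u = orth_proj xi l \<bullet> u" using l by simp
      then have "k \<bullet> u + w \<bullet> u = l \<bullet> u"
        using orth_proj_inner[OF xi(1) u] by (simp add: inner_add_left)
      moreover have "l \<bullet> u \<le> hL u" unfolding hL_def using hs_upper[OF assms(4) l(1)] .
      ultimately show ?thesis using k unfolding hK_def by (simp add: inner_commute)
    qed
    then show ?thesis by blast
  qed
  have P: "(\<Sum>i\<in>S. hK (a i)) \<le> (\<Sum>i\<in>S. hL (a i))"
    if S: "finite S" "card S \<le> m + 1" "(\<Sum>i\<in>S. a i) = 0" for S :: "('a \<times> real) set" and a
  proof (cases "S = {}")
    case True then show ?thesis by simp
  next
    case False
    then obtain j where j: "j \<in> S" by blast
    have se: "(\<Sum>i\<in>S. a i) = a j + (\<Sum>i\<in>S-{j}. a i)"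
      using S(1) j by (rule sum.remove)
    have sj: "a j = - (\<Sum>i\<in>S-{j}. a i)"
      using S(3) se by (simp add: eq_neg_iff_add_eq_0)
    have sub: "a ` S \<subseteq> span (a ` (S - {j}))"
    proof
      fix v assume "v \<in> a ` S"
      then obtain i where i: "i \<in> S" "v = a i" by blast
      show "v \<in> span (a ` (S - {j}))"
      proof (cases "i = j")
        case True
        have "(\<Sum>i\<in>S-{j}. a i) \<in> span (a ` (S - {j}))"
          by (intro span_sum) (auto intro: span_base)
        then show ?thesis using i True sj by (simp add: span_neg)
      next
        case False then show ?thesis using i by (auto intro: span_base)
      qed
    qed
    have "dim (a ` S) \<le> card (a ` (S - {j}))" using dim_le_card[OF sub] S(1) by simp
    also have "\<dots> \<le> card (S - {j})" using S(1) by (simp add: card_image_le)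
    also have "\<dots> \<le> m" using S j by simp
    finally have dle: "dim (a ` S) \<le> m" .
    have mD: "m \<le> DIM('a)" using mn unfolding n_def .
    obtain T where T: "subspace T" "a ` S \<subseteq> T" "dim T = m"
      using subspace_extend[OF dle mD] by blast
    obtain w where w: "\<forall>u\<in>T. hK u + w \<bullet> u \<le> hL u" using proj[OF T(1) T(3)] by blast
    have "(\<Sum>i\<in>S. hK (a i) + w \<bullet> a i) \<le> (\<Sum>i\<in>S. hL (a i))"
    proof (intro sum_mono)
      fix i assume "i \<in> S"
      then have "a i \<in> T" using T(2) by blast
      then show "hK (a i) + w \<bullet> a i \<le> hL (a i)" using w by blast
    qed
    moreover have "(\<Sum>i\<in>S. w \<bullet> a i) = 0" using S(3) inner_sum_right[of w a S] by simp
    ultimately show ?thesis by (simp add: sum.distrib)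
  qed
  define g where "g u = hK u - lam * hL u" for u
  have homg: "\<And>c u. c \<ge> 0 \<Longrightarrow> g (c *\<^sub>R u) = c * g u"
    unfolding g_def using homK homL by (simp add: algebra_simps)
  have small: "(\<Sum>i\<in>T. g (b i)) \<le> 0"
    if T: "finite T" "card T \<le> DIM('a) + 1" "(\<Sum>i\<in>T. b i) = 0" for T :: "('a \<times> real) set" and b
  proof -
    define HL where "HL = (\<Sum>i\<in>T. hL (b i))"
    define HK where "HK = (\<Sum>i\<in>T. hK (b i))"
    have "hL (\<Sum>i\<in>T. b i) \<le> HL" unfolding HL_def by (rule sub_sum[OF subL hL0 T(1)])
    then have HL0: "HL \<ge> 0" using T(3) hL0 by simp
    have "HK \<le> lam * HL"
    proof (cases "card T \<le> m + 1")
      case True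
      have "HK \<le> HL" using P[OF T(1) True T(3)] unfolding HK_def HL_def by simp
      also have "\<dots> \<le> lam * HL" using lam1 HL0 by (simp add: mult_le_cancel_right1)
      finally show ?thesis .
    next
      case False
      have Pc: "(\<Sum>i\<in>S. hK (a i)) \<le> (\<Sum>i\<in>S. hL (a i))"
        if "finite S" "card S = m + 1" "(\<Sum>i\<in>S. a i) = 0" for S :: "('a \<times> real) set" and a
        using P that by simp
      have "real m * HK \<le> (real (card T) - 1) * HL"
        unfolding HK_def HL_def
        by (rule comb[OF subK homK subL homL m1 Pc, of "card T" T b]) (use False T in auto)
      also have "\<dots> \<le> real n * HL"
        using T(2) HL0 unfolding n_def by (intro mult_right_mono) auto
      finally have "real m * HK \<le> real n * HL" .
      then show ?thesis using m1 unfolding lam_def by (simp add: field_simps)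
    qed
    then show ?thesis unfolding g_def HK_def HL_def by (simp add: sum_subtractf sum_distrib_left)
  qed
  have dual: "(\<Sum>i\<in>S. g (a i)) \<le> 0"
    if "finite S" "(\<Sum>i\<in>S. a i) = 0" for S :: "('a \<times> real) set" and a
    by (rule reduce[OF homg small that])
  define Q where "Q = convex hull (range (\<lambda>u. (u, g u)))"
  define R where "R = {0::'a} \<times> {0::real<..}"
  have disj: "Q \<inter> R = {}"
  proof (rule ccontr)
    assume "Q \<inter> R \<noteq> {}"
    then obtain t where t: "t > 0" "(0, t) \<in> Q" unfolding R_def by auto
    then obtain F \<mu> where F: "finite F" "F \<subseteq> range (\<lambda>u. (u, g u))" "\<forall>x\<in>F. 0 \<le> \<mu> x"
      "sum \<mu> F = 1" "(\<Sum>v\<in>F. \<mu> v *\<^sub>R v) = (0, t)"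
      unfolding Q_def convex_hull_explicit by blast
    have s1: "(\<Sum>v\<in>F. \<mu> v *\<^sub>R fst v) = 0"
      using arg_cong[OF F(5), of fst] by (simp add: fst_sum)
    have s2: "(\<Sum>v\<in>F. \<mu> v * snd v) = t"
      using arg_cong[OF F(5), of snd] by (simp add: snd_sum)
    have "(\<Sum>v\<in>F. g (\<mu> v *\<^sub>R fst v)) = (\<Sum>v\<in>F. \<mu> v * snd v)"
    proof (intro sum.cong refl)
      fix v assume v: "v \<in> F"
      then have "snd v = g (fst v)" using F(2) by auto
      then show "g (\<mu> v *\<^sub>R fst v) = \<mu> v * snd v" using homg F(3) v by simp
    qed
    then have "(\<Sum>v\<in>F. g (\<mu> v *\<^sub>R fst v)) > 0" using s2 t by simp
    moreover have "(\<Sum>v\<in>F. g (\<mu> v *\<^sub>R fst v)) \<le> 0" by (rule dual[OF F(1) s1])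
    ultimately show False by simp
  qed
  have "convex Q" unfolding Q_def by simp
  moreover have "convex R" unfolding R_def by (intro convex_Times) auto
  moreover have "Q \<noteq> {}" unfolding Q_def by simp
  moreover have "R \<noteq> {}" unfolding R_def by auto
  ultimately obtain A b where Ab: "A \<noteq> 0" "\<forall>x\<in>Q. inner A x \<le> b" "\<forall>x\<in>R. inner A x \<ge> b"
    using separating_hyperplane_sets[of Q R] disj by blast
  obtain y \<beta> where A: "A = (y, \<beta>)" by (cases A)
  have Qle: "y \<bullet> u + \<beta> * g u \<le> b" for u
  proof -
    have "(u, g u) \<in> Q" unfolding Q_def by (rule hull_inc) simp
    then show ?thesis using Ab(2) A by auto
  qed
  have Rge: "\<beta> * t \<ge> b" if "t > 0" for t
    using Ab(3) that A unfolding R_def by auto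
  have b0: "b \<ge> 0" using Qle[of 0] homg[of 0 0] by simp
  have beta0: "\<beta> \<ge> 0" using Rge[of 1] b0 by simp
  have hom_le: "y \<bullet> u + \<beta> * g u \<le> 0" for u
  proof (rule ccontr)
    assume s: "\<not> ?thesis"
    define s where "s = y \<bullet> u + \<beta> * g u"
    have sp: "s > 0" using s unfolding s_def by simp
    define c where "c = (b + 1) / s"
    have c0: "c \<ge> 0" using sp b0 unfolding c_def by simp
    have "y \<bullet> (c *\<^sub>R u) + \<beta> * g (c *\<^sub>R u) = c * s"
      unfolding s_def using homg[OF c0] by (simp add: algebra_simps)
    also have "\<dots> = b + 1" using sp unfolding c_def by simp
    finally show False using Qle[of "c *\<^sub>R u"] by simp
  qed
  have betapos: "\<beta> > 0"
  proof (rule ccontr)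
    assume "\<not> \<beta> > 0"
    then have "\<beta> = 0" using beta0 by simp
    then have "y \<bullet> y \<le> 0" using hom_le[of y] by simp
    then have "y = 0" by (metis antisym inner_ge_zero inner_eq_zero_iff)
    then show False using Ab(1) A \<open>\<beta> = 0\<close> by (simp add: zero_prod_def)
  qed
  define z where "z = (- 1 / \<beta>) *\<^sub>R y"
  have gz: "hK u - z \<bullet> u \<le> lam * hL u" for u
  proof -
    have "\<beta> * g u \<le> - (y \<bullet> u)" using hom_le[of u] by simp
    then have "g u \<le> - (y \<bullet> u) / \<beta>" using betapos by (simp add: field_simps)
    then show ?thesis unfolding g_def z_def by (simp add: field_simps)
  qed
  define M where "M = (\<lambda>v. lam *\<^sub>R v) ` L"
  have "compact M" unfolding M_def using assms(4) by (rule compact_scaling)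
  then have clM: "closed M" by (rule compact_imp_closed)
  have cvM: "convex M" unfolding M_def using assms(5) by (rule convex_scaling)
  have "(\<lambda>v. v + (- z)) ` K \<subseteq> M"
  proof
    fix p assume "p \<in> (\<lambda>v. v + (- z)) ` K"
    then obtain k where k: "k \<in> K" "p = k - z" by auto
    show "p \<in> M"
    proof (rule ccontr)
      assume "p \<notin> M"
      then obtain a c where ac: "a \<bullet> p < c" "\<forall>x\<in>M. a \<bullet> x > c"
        using separating_hyperplane_closed_point[OF cvM clM] by blast
      define u where "u = - a"
      obtain l where l: "l \<in> L" "hs L u = l \<bullet> u" using hs_attain[OF assms(4) Lne, of u] by blast
      have "lam *\<^sub>R l \<in> M" unfolding M_def using l by auto
      then have "a \<bullet> (lam *\<^sub>R l) > c" using ac by auto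
      then have "lam * hL u < u \<bullet> p" using ac(1) l unfolding u_def hL_def by (simp add: inner_commute)
      moreover have "u \<bullet> p \<le> hK u - z \<bullet> u"
        using hs_upper[OF assms(2) k(1), of u] k(2) unfolding hK_def
        by (simp add: inner_diff_right inner_commute[of u k] inner_commute[of u z])
      ultimately show False using gz[of u] by simp
    qed
  qed
  then have "(\<lambda>v. v + (- z)) ` K \<subseteq> (\<lambda>v. (real DIM('a) / real (DIM('a) - d)) *\<^sub>R v) ` L"
    unfolding M_def lam_def m_def n_def .
  then show ?thesis by (rule exI)
qed


end
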